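(* Let $G$ be a compact Lie group with normalized Haar measure $dg$, and let $\sigma_1,\sigma_2,\alpha_1,\alpha_2,\rho$ be finite-dimensional unitary representations of $G$. Then the operator on $V_{\sigma_1}\otimes V_{\sigma_2}$ $$\Phi:=\int_{G\times G}\chi_{\alpha_1}(g)\,\chi_{\alpha_2}(h)\,\chi_{\rho}(g h^{-1})\,\sigma_1(g)\otimes\sigma_2(h)\,dg\,dh$$ is positive, i.e. $\langle v,\Phi v\rangle\geq0$ for all $v\in V_{\sigma_1}\otimes V_{\sigma_2}$.
   Context: $\chi_\rho(g)=\mathrm{tr}\,\rho(g)$ denotes the character of a finite-dimensional representation $\rho$. Representation spaces carry $G$-invariant scalar products making the representations unitary, and the tensor product carries the induced scalar product. An operator $A$ is positive if $\langle v,Av\rangle\ge 0$ for all $v$. *)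

theory Defs
  imports "HOL-Probability.Probability" "Jordan_Normal_Form.Schur_Decomposition"
begin

definition compact_group ::
  "'g topology \<Rightarrow> ('g \<Rightarrow> 'g \<Rightarrow> 'g) \<Rightarrow> ('g \<Rightarrow> 'g) \<Rightarrow> 'g \<Rightarrow> bool" where
  "compact_group T mul iv e \<longleftrightarrow>
     e \<in> topspace T \<and>
     (\<forall>x\<in>topspace T. \<forall>y\<in>topspace T. mul x y \<in> topspace T) \<and>
     (\<forall>x\<in>topspace T. iv x \<in> topspace T) \<and>
     (\<forall>x\<in>topspace T. \<forall>y\<in>topspace T. \<forall>z\<in>topspace T. mul (mul x y) z = mul x (mul y z)) \<and>
     (\<forall>x\<in>topspace T. mul e x = x \<and> mul x e = x) \<and>
     (\<forall>x\<in>topspace T. mul (iv x) x = e \<and> mul x (iv x) = e) \<and>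
     continuous_map (prod_topology T T) T (\<lambda>(x, y). mul x y) \<and>
     continuous_map T T iv \<and>
     compact_space T \<and> Hausdorff_space T"

definition normalized_haar ::
  "'g topology \<Rightarrow> ('g \<Rightarrow> 'g \<Rightarrow> 'g) \<Rightarrow> 'g measure \<Rightarrow> bool" where
  "normalized_haar T mul M \<longleftrightarrow>
     space M = topspace T \<and>
     sets M = sigma_sets (topspace T) {U. openin T U} \<and>
     prob_space M \<and>
     (\<forall>g\<in>topspace T. \<forall>A\<in>sets M. (mul g) ` A \<in> sets M \<and> measure M ((mul g) ` A) = measure M A) \<and>
     (\<forall>A\<in>sets M. measure M A = (INF U\<in>{U. openin T U \<and> A \<subseteq> U}. measure M U)) \<and>
     (\<forall>U. openin T U \<longrightarrow> measure M U = (SUP K\<in>{K. compactin T K \<and> K \<subseteq> U}. measure M K))"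

text \<open>A finite-dimensional (dimension d) continuous unitary representation,
  written in an orthonormal basis for the invariant scalar product.\<close>
definition unitary_rep ::
  "'g topology \<Rightarrow> ('g \<Rightarrow> 'g \<Rightarrow> 'g) \<Rightarrow> nat \<Rightarrow> ('g \<Rightarrow> complex mat) \<Rightarrow> bool" where
  "unitary_rep T mul d \<rho> \<longleftrightarrow>
     (\<forall>g\<in>topspace T. \<rho> g \<in> carrier_mat d d \<and> mat_adjoint (\<rho> g) * \<rho> g = 1\<^sub>m d) \<and>
     (\<forall>g\<in>topspace T. \<forall>h\<in>topspace T. \<rho> (mul g h) = \<rho> g * \<rho> h) \<and>
     (\<forall>i<d. \<forall>j<d. continuous_map T euclidean (\<lambda>g. \<rho> g $$ (i, j)))"

definition character :: "('g \<Rightarrow> complex mat) \<Rightarrow> 'g \<Rightarrow> complex" where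
  "character \<rho> g = (\<Sum>i<dim_row (\<rho> g). \<rho> g $$ (i, i))"

text \<open>Kronecker (tensor) product of an n x n and an m x m matrix; the basis
  vector e_a \<otimes> f_b has index a * m + b.\<close>
definition tensor_mat :: "nat \<Rightarrow> nat \<Rightarrow> complex mat \<Rightarrow> complex mat \<Rightarrow> complex mat" where
  "tensor_mat n m A B = mat (n * m) (n * m)
     (\<lambda>(i, j). A $$ (i div m, j div m) * B $$ (i mod m, j mod m))"

definition Phi_op ::
  "'g measure \<Rightarrow> ('g \<Rightarrow> 'g \<Rightarrow> 'g) \<Rightarrow> ('g \<Rightarrow> 'g) \<Rightarrow> nat \<Rightarrow> ('g \<Rightarrow> complex mat)
   \<Rightarrow> nat \<Rightarrow> ('g \<Rightarrow> complex mat) \<Rightarrow> ('g \<Rightarrow> complex mat) \<Rightarrow> ('g \<Rightarrow> complex mat)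
   \<Rightarrow> ('g \<Rightarrow> complex mat) \<Rightarrow> complex mat" where
  "Phi_op M mul iv d1 \<sigma>1 d2 \<sigma>2 \<alpha>1 \<alpha>2 \<rho> = mat (d1 * d2) (d1 * d2)
     (\<lambda>(i, j). integral\<^sup>L (M \<Otimes>\<^sub>M M)
        (\<lambda>(g, h). character \<alpha>1 g * character \<alpha>2 h * character \<rho> (mul g (iv h))
                   * tensor_mat d1 d2 (\<sigma>1 g) (\<sigma>2 h) $$ (i, j)))"

definition positive_op :: "nat \<Rightarrow> complex mat \<Rightarrow> bool" where
  "positive_op n A \<longleftrightarrow> (\<forall>v\<in>carrier_vec n.
     Im (conjugate v \<bullet> (A *\<^sub>v v)) = 0 \<and> 0 \<le> Re (conjugate v \<bullet> (A *\<^sub>v v)))"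

end

theory Submission
  imports Defs
begin

lemma adj_entry:
  assumes "A \<in> carrier_mat n n" "i < n" "j < n"
  shows "mat_adjoint A $$ (i,j) = cnj (A $$ (j,i))"
  using assms unfolding mat_adjoint_def by (simp add: mat_of_rows_index)

lemma adj_carrier:
  assumes "A \<in> carrier_mat n n"
  shows "mat_adjoint A \<in> carrier_mat n n"
  using assms unfolding mat_adjoint_def by auto

lemma reorder:
  fixes v :: "'x \<Rightarrow> complex" and F :: "'r \<Rightarrow> 'a \<Rightarrow> 'k \<Rightarrow> 'x \<Rightarrow> complex"
    and G :: "'s \<Rightarrow> 'b \<Rightarrow> 'k \<Rightarrow> 'x \<Rightarrow> complex"
  shows "(\<Sum>x\<in>X1. cnj (v x) * (\<Sum>y\<in>X2. (\<Sum>a\<in>A. \<Sum>b\<in>B. \<Sum>k\<in>K1. \<Sum>l\<in>K2.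
        (\<Sum>r\<in>R. cnj (F r a k x) * F r a l y) * (\<Sum>s\<in>S. cnj (G s b k x) * G s b l y)) * v y))
   = (\<Sum>a\<in>A. \<Sum>b\<in>B. \<Sum>r\<in>R. \<Sum>s\<in>S.
        cnj (\<Sum>x\<in>X1. \<Sum>k\<in>K1. F r a k x * G s b k x * v x) * (\<Sum>y\<in>X2. \<Sum>l\<in>K2. F r a l y * G s b l y * v y))"
  apply (simp only: sum_distrib_left sum_distrib_right cnj_sum complex_cnj_mult)
  apply (simp only: sum.swap[of _ A B] sum.swap[of _ A R] sum.swap[of _ A S] sum.swap[of _ A X2] sum.swap[of _ A K2] sum.swap[of _ A X1] sum.swap[of _ A K1] sum.swap[of _ B R] sum.swap[of _ B S] sum.swap[of _ B X2] sum.swap[of _ B K2] sum.swap[of _ B X1] sum.swap[of _ B K1] sum.swap[of _ R S] sum.swap[of _ R X2] sum.swap[of _ R K2] sum.swap[of _ R X1] sum.swap[of _ R K1] sum.swap[of _ S X2] sum.swap[of _ S K2] sum.swap[of _ S X1] sum.swap[of _ S K1] sum.swap[of _ X2 K2] sum.swap[of _ X2 X1] sum.swap[of _ X2 K1] sum.swap[of _ K2 X1] sum.swap[of _ K2 K1] sum.swap[of _ X1 K1])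
  apply (intro sum.cong refl)
  apply (simp add: mult_ac)
  done

lemma sum4_psd:
  fixes W :: "'a \<Rightarrow> 'b \<Rightarrow> 'c \<Rightarrow> 'd \<Rightarrow> complex"
  shows "Im (\<Sum>a\<in>A. \<Sum>b\<in>B. \<Sum>r\<in>R. \<Sum>s\<in>S. cnj (W a b r s) * W a b r s) = 0"
    and "0 \<le> Re (\<Sum>a\<in>A. \<Sum>b\<in>B. \<Sum>r\<in>R. \<Sum>s\<in>S. cnj (W a b r s) * W a b r s)"
proof -
  have c: "\<And>z::complex. cnj z * z = of_real ((cmod z)^2)"
    by (metis complex_norm_square mult.commute)
  show "Im (\<Sum>a\<in>A. \<Sum>b\<in>B. \<Sum>r\<in>R. \<Sum>s\<in>S. cnj (W a b r s) * W a b r s) = 0"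
    unfolding c by (simp add: Im_sum)
  show "0 \<le> Re (\<Sum>a\<in>A. \<Sum>b\<in>B. \<Sum>r\<in>R. \<Sum>s\<in>S. cnj (W a b r s) * W a b r s)"
    unfolding c by (simp add: Re_sum sum_nonneg)
qed

locale cgrp =
  fixes T :: "'g topology" and mul :: "'g \<Rightarrow> 'g \<Rightarrow> 'g" and iv :: "'g \<Rightarrow> 'g" and e :: 'g
    and M :: "'g measure"
  assumes cg: "compact_group T mul iv e" and hr: "normalized_haar T mul M"
begin

lemma space_M: "space M = topspace T" using hr unfolding normalized_haar_def by auto
lemma sets_M: "sets M = sigma_sets (topspace T) {U. openin T U}" using hr unfolding normalized_haar_def by auto
lemma prob: "prob_space M" using hr unfolding normalized_haar_def by auto
lemma e_in: "e \<in> topspace T" using cg unfolding compact_group_def by auto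
lemma mul_in: "x \<in> topspace T \<Longrightarrow> y \<in> topspace T \<Longrightarrow> mul x y \<in> topspace T" using cg unfolding compact_group_def by auto
lemma iv_in: "x \<in> topspace T \<Longrightarrow> iv x \<in> topspace T" using cg unfolding compact_group_def by auto
lemma assoc: "x \<in> topspace T \<Longrightarrow> y \<in> topspace T \<Longrightarrow> z \<in> topspace T \<Longrightarrow> mul (mul x y) z = mul x (mul y z)"
  using cg unfolding compact_group_def by auto
lemma unit: "x \<in> topspace T \<Longrightarrow> mul e x = x" "x \<in> topspace T \<Longrightarrow> mul x e = x" using cg unfolding compact_group_def by auto
lemma inv: "x \<in> topspace T \<Longrightarrow> mul (iv x) x = e" "x \<in> topspace T \<Longrightarrow> mul x (iv x) = e" using cg unfolding compact_group_def by auto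
lemma inv_img: "A \<in> sets M \<Longrightarrow> x \<in> topspace T \<Longrightarrow> mul x ` A \<in> sets M \<and> measure M (mul x ` A) = measure M A"
  using hr unfolding normalized_haar_def by auto

lemma mul_meas:
  assumes x: "x \<in> topspace T"
  shows "mul x \<in> measurable M M" and "distr M M (mul x) = M"
proof -
  have pre: "mul x -` A \<inter> space M = mul (iv x) ` A" if A: "A \<in> sets M" for A
  proof -
    have Asub: "A \<subseteq> topspace T" using sets.sets_into_space[OF A] space_M by auto
    show ?thesis
    proof safe
      fix h assume h: "h \<in> space M" "mul x h \<in> A"
      have "h = mul (iv x) (mul x h)"
        using h x by (simp add: space_M assoc[symmetric] iv_in inv unit)
      then show "h \<in> mul (iv x) ` A" using h by blast
    next
      fix a assume a: "a \<in> A"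
      then have at: "a \<in> topspace T" using Asub by auto
      have "mul x (mul (iv x) a) = mul (mul x (iv x)) a" using assoc[OF x iv_in[OF x] at] by simp
      then show "mul (iv x) a \<in> mul x -` A" using a at x by (simp add: inv unit)
      show "mul (iv x) a \<in> space M" using at x by (simp add: space_M mul_in iv_in)
    qed
  qed
  show mm: "mul x \<in> measurable M M"
  proof (rule measurableI)
    show "\<And>h. h \<in> space M \<Longrightarrow> mul x h \<in> space M" using x by (simp add: space_M mul_in)
    show "\<And>A. A \<in> sets M \<Longrightarrow> mul x -` A \<inter> space M \<in> sets M"
      using pre inv_img x iv_in by metis
  qed
  interpret prob_space M by (rule prob)
  show "distr M M (mul x) = M"
  proof (rule measure_eqI)
    show "sets (distr M M (mul x)) = sets M" by simp
    fix A assume "A \<in> sets (distr M M (mul x))"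
    then have A: "A \<in> sets M" by simp
    have "emeasure (distr M M (mul x)) A = emeasure M (mul (iv x) ` A)"
      using A mm by (simp add: emeasure_distr pre)
    also have "\<dots> = emeasure M A"
      using inv_img[OF A iv_in[OF x]] by (simp add: emeasure_eq_measure)
    finally show "emeasure (distr M M (mul x)) A = emeasure M A" .
  qed
qed

lemma left_inv_integral:
  fixes f :: "'g \<Rightarrow> complex"
  assumes x: "x \<in> topspace T" and f: "f \<in> borel_measurable M"
  shows "(\<integral>h. f (mul x h) \<partial>M) = integral\<^sup>L M f"
  using integral_distr[OF mul_meas(1)[OF x] f] mul_meas(2)[OF x] by simp

lemma cont_meas:
  fixes f :: "'g \<Rightarrow> complex"
  assumes "continuous_map T euclidean f"
  shows "f \<in> borel_measurable M"
proof (rule borel_measurableI)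
  fix S :: "complex set" assume "open S"
  then have "openin T {x \<in> topspace T. f x \<in> S}"
    using assms by (simp add: openin_continuous_map_preimage)
  moreover have "f -` S \<inter> space M = {x \<in> topspace T. f x \<in> S}" using space_M by auto
  ultimately show "f -` S \<inter> space M \<in> sets M" by (simp add: sets_M sigma_sets.Basic)
qed

lemma cont_bdd:
  fixes f :: "'g \<Rightarrow> 'b::real_normed_vector"
  assumes "continuous_map T euclidean f"
  shows "\<exists>B. \<forall>x\<in>space M. norm (f x) \<le> B"
proof -
  have "compact_space T" using cg unfolding compact_group_def by auto
  then have "compactin euclidean (f ` topspace T)"
    using assms image_compactin compact_space_def by blast
  then have "compact (f ` topspace T)" by (simp add: compactin_euclidean_iff)
  then have "bounded (f ` topspace T)" by (rule compact_imp_bounded)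
  then show ?thesis unfolding bounded_iff space_M by auto
qed


definition good :: "('g \<Rightarrow> complex) \<Rightarrow> bool" where
  "good f \<longleftrightarrow> f \<in> borel_measurable M \<and> (\<exists>B. \<forall>x\<in>space M. norm (f x) \<le> B)"

lemma good_mult: "good f \<Longrightarrow> good g \<Longrightarrow> good (\<lambda>x. f x * g x)"
  unfolding good_def
proof (elim conjE exE, intro conjI)
  fix B C assume "\<forall>x\<in>space M. norm (f x) \<le> B" "\<forall>x\<in>space M. norm (g x) \<le> C"
  then have "\<forall>x\<in>space M. norm (f x * g x) \<le> B * C"
    by (auto simp: norm_mult intro!: mult_mono) (meson norm_ge_zero order_trans)
  then show "\<exists>B. \<forall>x\<in>space M. norm (f x * g x) \<le> B" by blast
qed auto

lemma good_cnj: "good f \<Longrightarrow> good (\<lambda>x. cnj (f x))"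
  unfolding good_def
  by (auto intro!: borel_measurable_continuous_on[where f=cnj] continuous_intros)

lemma good_integrable: "good f \<Longrightarrow> integrable M f"
proof -
  interpret prob_space M by (rule prob)
  assume "good f"
  then obtain B where "f \<in> borel_measurable M" "\<forall>x\<in>space M. norm (f x) \<le> B" unfolding good_def by auto
  then show ?thesis by (intro integrable_const_bound[where B=B]) auto
qed

lemma cont_good: "continuous_map T euclidean f \<Longrightarrow> good f"
  unfolding good_def using cont_meas cont_bdd by blast

definition mrep :: "'i set \<Rightarrow> ('g \<Rightarrow> 'i \<Rightarrow> 'i \<Rightarrow> complex) \<Rightarrow> bool" where
  "mrep I X \<longleftrightarrow>
     (\<forall>g\<in>topspace T. \<forall>h\<in>topspace T. \<forall>p\<in>I. \<forall>q\<in>I. X (mul g h) p q = (\<Sum>r\<in>I. X g p r * X h r q)) \<and>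
     (\<forall>g\<in>topspace T. \<forall>p\<in>I. \<forall>q\<in>I. X (iv g) p q = cnj (X g q p)) \<and>
     (\<forall>p\<in>I. \<forall>q\<in>I. good (\<lambda>g. X g p q))"

definition tens :: "('g \<Rightarrow> 'i \<Rightarrow> 'i \<Rightarrow> complex) \<Rightarrow> ('g \<Rightarrow> 'j \<Rightarrow> 'j \<Rightarrow> complex) \<Rightarrow> 'g \<Rightarrow> 'i \<times> 'j \<Rightarrow> 'i \<times> 'j \<Rightarrow> complex" where
  "tens X Y g p q = X g (fst p) (fst q) * Y g (snd p) (snd q)"

lemma mrep_tens:
  assumes X: "mrep I X" and Y: "mrep J Y" and fin: "finite I" "finite J"
  shows "mrep (I \<times> J) (tens X Y)"
  unfolding mrep_def
proof (intro conjI ballI)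
  fix g h p q assume g: "g \<in> topspace T" and h: "h \<in> topspace T" and p: "p \<in> I \<times> J" and q: "q \<in> I \<times> J"
  have "tens X Y (mul g h) p q = (\<Sum>r\<in>I. X g (fst p) r * X h r (fst q)) * (\<Sum>s\<in>J. Y g (snd p) s * Y h s (snd q))"
    using X Y g h p q unfolding mrep_def tens_def by auto
  also have "\<dots> = (\<Sum>r\<in>I. \<Sum>s\<in>J. (X g (fst p) r * Y g (snd p) s) * (X h r (fst q) * Y h s (snd q)))"
    by (simp add: sum_product mult_ac)
  also have "\<dots> = (\<Sum>rs\<in>I \<times> J. tens X Y g p rs * tens X Y h rs q)"
    unfolding tens_def by (simp add: sum.cartesian_product split_def)
  finally show "tens X Y (mul g h) p q = (\<Sum>r\<in>I \<times> J. tens X Y g p r * tens X Y h r q)" .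
next
  fix g p q assume g: "g \<in> topspace T" and p: "p \<in> I \<times> J" and q: "q \<in> I \<times> J"
  show "tens X Y (iv g) p q = cnj (tens X Y g q p)"
    using X Y g p q unfolding mrep_def tens_def by auto
next
  fix p q assume p: "p \<in> I \<times> J" and q: "q \<in> I \<times> J"
  show "good (\<lambda>g. tens X Y g p q)"
    unfolding tens_def using X Y p q unfolding mrep_def by (auto intro!: good_mult)
qed

lemma keyA:
  assumes X: "mrep I X" and fin: "finite I" and p: "p \<in> I" and q: "q \<in> I"
  shows "(\<integral>g. X g p q \<partial>M) = (\<Sum>r\<in>I. cnj (\<integral>g. X g r p \<partial>M) * (\<integral>g. X g r q \<partial>M))"
proof -
  interpret prob_space M by (rule prob)
  have gd: "\<And>p q. p \<in> I \<Longrightarrow> q \<in> I \<Longrightarrow> good (\<lambda>g. X g p q)" using X unfolding mrep_def by auto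
  have int: "\<And>p q. p \<in> I \<Longrightarrow> q \<in> I \<Longrightarrow> integrable M (\<lambda>g. X g p q)" using gd good_integrable by blast
  have "(\<Sum>r\<in>I. cnj (\<integral>g. X g r p \<partial>M) * (\<integral>h. X h r q \<partial>M))
      = (\<Sum>r\<in>I. \<integral>g. cnj (X g r p) * (\<integral>h. X h r q \<partial>M) \<partial>M)"
    by simp
  also have "\<dots> = (\<integral>g. (\<Sum>r\<in>I. cnj (X g r p) * (\<integral>h. X h r q \<partial>M)) \<partial>M)"
  proof (rule Bochner_Integration.integral_sum[symmetric])
    fix r assume r: "r \<in> I"
    have "good (\<lambda>g. cnj (X g r p))" using gd[OF r p] by (rule good_cnj)
    then show "integrable M (\<lambda>g. cnj (X g r p) * (\<integral>h. X h r q \<partial>M))"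
      by (intro integrable_mult_left good_integrable)
  qed
  also have "\<dots> = (\<integral>g. (\<integral>h. (\<Sum>r\<in>I. cnj (X g r p) * X h r q) \<partial>M) \<partial>M)"
    using int q by (subst Bochner_Integration.integral_sum) auto
  also have "\<dots> = (\<integral>g. (\<integral>h. X (mul (iv g) h) p q \<partial>M) \<partial>M)"
  proof (intro Bochner_Integration.integral_cong refl)
    fix g h assume g: "g \<in> space M" and h: "h \<in> space M"
    then show "(\<Sum>r\<in>I. cnj (X g r p) * X h r q) = X (mul (iv g) h) p q"
      using X p q iv_in unfolding mrep_def space_M by simp
  qed
  also have "\<dots> = (\<integral>g. (\<integral>h. X h p q \<partial>M) \<partial>M)"
  proof (rule Bochner_Integration.integral_cong[OF refl])
    fix g assume "g \<in> space M"
    then show "(\<integral>h. X (mul (iv g) h) p q \<partial>M) = (\<integral>h. X h p q \<partial>M)"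
      using gd[OF p q] iv_in unfolding good_def space_M
      by (intro left_inv_integral[where f="\<lambda>h. X h p q"]) auto
  qed
  also have "\<dots> = (\<integral>h. X h p q \<partial>M)" by (simp add: prob_space)
  finally show ?thesis by simp
qed


context
  fixes d :: nat and \<rho> :: "'g \<Rightarrow> complex mat"
  assumes U: "unitary_rep T mul d \<rho>"
begin

lemma rcar: "g \<in> topspace T \<Longrightarrow> \<rho> g \<in> carrier_mat d d"
  using U unfolding unitary_rep_def by auto

lemma runit: "g \<in> topspace T \<Longrightarrow> mat_adjoint (\<rho> g) * \<rho> g = 1\<^sub>m d"
  using U unfolding unitary_rep_def by auto

lemma rhom: "g \<in> topspace T \<Longrightarrow> h \<in> topspace T \<Longrightarrow> \<rho> (mul g h) = \<rho> g * \<rho> h"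
  using U unfolding unitary_rep_def by auto

lemma rcont: "i < d \<Longrightarrow> j < d \<Longrightarrow> continuous_map T euclidean (\<lambda>g. \<rho> g $$ (i, j))"
  using U unfolding unitary_rep_def by auto

lemma r_e: "\<rho> e = 1\<^sub>m d"
proof -
  let ?A = "\<rho> e"
  have A: "?A \<in> carrier_mat d d" by (rule rcar[OF e_in])
  have AA: "?A * ?A = ?A" using rhom[OF e_in e_in] unit(1)[OF e_in] by simp
  have adj: "mat_adjoint ?A \<in> carrier_mat d d" by (rule adj_carrier[OF A])
  have "?A = (mat_adjoint ?A * ?A) * ?A" using runit[OF e_in] A by simp
  also have "\<dots> = mat_adjoint ?A * (?A * ?A)" using assoc_mult_mat[OF adj A A] .
  also have "\<dots> = 1\<^sub>m d" using AA runit[OF e_in] by simp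
  finally show ?thesis .
qed

lemma r_iv: assumes g: "g \<in> topspace T" shows "\<rho> (iv g) = mat_adjoint (\<rho> g)"
proof -
  have A: "\<rho> g \<in> carrier_mat d d" by (rule rcar[OF g])
  have B: "\<rho> (iv g) \<in> carrier_mat d d" by (rule rcar[OF iv_in[OF g]])
  have adj: "mat_adjoint (\<rho> g) \<in> carrier_mat d d" by (rule adj_carrier[OF A])
  have AB: "\<rho> g * \<rho> (iv g) = 1\<^sub>m d" using rhom[OF g iv_in[OF g]] inv(2)[OF g] r_e by simp
  have "mat_adjoint (\<rho> g) = mat_adjoint (\<rho> g) * (\<rho> g * \<rho> (iv g))" using AB adj by simp
  also have "\<dots> = (mat_adjoint (\<rho> g) * \<rho> g) * \<rho> (iv g)" using assoc_mult_mat[OF adj A B] by simp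
  also have "\<dots> = \<rho> (iv g)" using runit[OF g] B by simp
  finally show ?thesis by simp
qed

lemma r_iv_entry: "g \<in> topspace T \<Longrightarrow> p < d \<Longrightarrow> q < d \<Longrightarrow> \<rho> (iv g) $$ (p, q) = cnj (\<rho> g $$ (q, p))"
  using r_iv adj_entry rcar by metis

lemma r_mul_entry: "g \<in> topspace T \<Longrightarrow> h \<in> topspace T \<Longrightarrow> p < d \<Longrightarrow> q < d \<Longrightarrow>
   \<rho> (mul g h) $$ (p, q) = (\<Sum>r<d. \<rho> g $$ (p, r) * \<rho> h $$ (r, q))"
  using rhom rcar[of g] rcar[of h] by (simp add: scalar_prod_def atLeast0LessThan)

lemma mrep_entr: "mrep {..<d} (\<lambda>g p q. \<rho> g $$ (p, q))"
  unfolding mrep_def using r_mul_entry r_iv_entry rcont cont_good by auto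

lemma mrep_centr: "mrep {..<d} (\<lambda>g p q. cnj (\<rho> g $$ (p, q)))"
  unfolding mrep_def using r_mul_entry r_iv_entry rcont cont_good good_cnj by auto

lemma good_entr: "i < d \<Longrightarrow> j < d \<Longrightarrow> good (\<lambda>g. \<rho> g $$ (i, j))"
  using rcont cont_good by auto

end


lemma prod_int:
  assumes a: "good a" and b: "good b"
  shows "integrable (M \<Otimes>\<^sub>M M) (\<lambda>z. a (fst z) * b (snd z))"
    and "integral\<^sup>L (M \<Otimes>\<^sub>M M) (\<lambda>z. a (fst z) * b (snd z)) = integral\<^sup>L M a * integral\<^sup>L M b"
proof -
  interpret pair_prob_space M M by (simp add: pair_prob_space_def pair_sigma_finite_def prob prob_space_imp_sigma_finite)
  obtain A B where am: "a \<in> borel_measurable M" and ab: "\<forall>x\<in>space M. norm (a x) \<le> A"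
    and bm: "b \<in> borel_measurable M" and bb: "\<forall>x\<in>space M. norm (b x) \<le> B"
    using a b unfolding good_def by auto
  have "\<forall>z\<in>space (M \<Otimes>\<^sub>M M). norm (a (fst z) * b (snd z)) \<le> A * B"
    using ab bb by (auto simp: space_pair_measure norm_mult intro!: mult_mono) (meson norm_ge_zero order_trans)
  moreover have "(\<lambda>z. a (fst z) * b (snd z)) \<in> borel_measurable (M \<Otimes>\<^sub>M M)"
    using am bm by measurable
  ultimately show int: "integrable (M \<Otimes>\<^sub>M M) (\<lambda>z. a (fst z) * b (snd z))"
    by (intro P.integrable_const_bound[where B="A*B"]) auto
  have "integral\<^sup>L (M \<Otimes>\<^sub>M M) (\<lambda>z. a (fst z) * b (snd z)) = (\<integral>x. (\<integral>y. a x * b y \<partial>M) \<partial>M)"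
    using integral_fst'[OF int] by simp
  also have "\<dots> = integral\<^sup>L M a * integral\<^sup>L M b" by simp
  finally show "integral\<^sup>L (M \<Otimes>\<^sub>M M) (\<lambda>z. a (fst z) * b (snd z)) = integral\<^sup>L M a * integral\<^sup>L M b" .
qed

lemma int_sum4:
  assumes fin: "finite SA" "finite SB" "finite SK" "finite SL"
    and gA: "\<And>a b k l. a \<in> SA \<Longrightarrow> b \<in> SB \<Longrightarrow> k \<in> SK \<Longrightarrow> l \<in> SL \<Longrightarrow> good (A a b k l)"
    and gB: "\<And>a b k l. a \<in> SA \<Longrightarrow> b \<in> SB \<Longrightarrow> k \<in> SK \<Longrightarrow> l \<in> SL \<Longrightarrow> good (B a b k l)"
  shows "integral\<^sup>L (M \<Otimes>\<^sub>M M) (\<lambda>z. \<Sum>a\<in>SA. \<Sum>b\<in>SB. \<Sum>k\<in>SK. \<Sum>l\<in>SL. A a b k l (fst z) * B a b k l (snd z))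
    = (\<Sum>a\<in>SA. \<Sum>b\<in>SB. \<Sum>k\<in>SK. \<Sum>l\<in>SL. integral\<^sup>L M (A a b k l) * integral\<^sup>L M (B a b k l))"
proof -
  have i: "\<And>a b k l. a \<in> SA \<Longrightarrow> b \<in> SB \<Longrightarrow> k \<in> SK \<Longrightarrow> l \<in> SL \<Longrightarrow> integrable (M \<Otimes>\<^sub>M M) (\<lambda>z. A a b k l (fst z) * B a b k l (snd z))"
    using prod_int(1)[OF gA gB] by auto
  have e: "\<And>a b k l. a \<in> SA \<Longrightarrow> b \<in> SB \<Longrightarrow> k \<in> SK \<Longrightarrow> l \<in> SL \<Longrightarrow> integral\<^sup>L (M \<Otimes>\<^sub>M M) (\<lambda>z. A a b k l (fst z) * B a b k l (snd z)) = integral\<^sup>L M (A a b k l) * integral\<^sup>L M (B a b k l)"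
    using prod_int(2)[OF gA gB] by auto
  show ?thesis using i e by simp
qed

end

context cgrp begin

lemma char_eq: assumes "unitary_rep T mul d \<rho>" "g \<in> topspace T" shows "character \<rho> g = (\<Sum>a<d. \<rho> g $$ (a, a))"
proof -
  have "dim_row (\<rho> g) = d" using rcar[OF assms] by auto
  then show ?thesis unfolding character_def by simp
qed

lemma main:
  assumes U1: "unitary_rep T mul d1 \<sigma>1" and U2: "unitary_rep T mul d2 \<sigma>2"
    and Ua1: "unitary_rep T mul da1 \<alpha>1" and Ua2: "unitary_rep T mul da2 \<alpha>2"
    and Ur: "unitary_rep T mul dr \<rho>"
  shows "positive_op (d1 * d2) (Phi_op M mul iv d1 \<sigma>1 d2 \<sigma>2 \<alpha>1 \<alpha>2 \<rho>)"
proof -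
  define n where "n = d1 * d2"
  define I1 where "I1 = ({..<da1} \<times> {..<dr}) \<times> {..<d1}"
  define I2 where "I2 = ({..<da2} \<times> {..<dr}) \<times> {..<d2}"
  define X1 where "X1 = tens (tens (\<lambda>g p q. \<alpha>1 g $$ (p, q)) (\<lambda>g p q. \<rho> g $$ (p, q))) (\<lambda>g p q. \<sigma>1 g $$ (p, q))"
  define Y1 where "Y1 = tens (tens (\<lambda>g p q. \<alpha>2 g $$ (p, q)) (\<lambda>g p q. cnj (\<rho> g $$ (p, q)))) (\<lambda>g p q. \<sigma>2 g $$ (p, q))"
  have mX: "mrep I1 X1" unfolding I1_def X1_def
    by (intro mrep_tens mrep_entr[OF U1] mrep_entr[OF Ua1] mrep_entr[OF Ur]) auto
  have mY: "mrep I2 Y1" unfolding I2_def Y1_def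
    by (intro mrep_tens mrep_entr[OF U2] mrep_entr[OF Ua2] mrep_centr[OF Ur]) auto
  have fI1: "finite I1" and fI2: "finite I2" unfolding I1_def I2_def by auto
  define P where "P p q = (\<integral>g. X1 g p q \<partial>M)" for p q
  define Q where "Q p q = (\<integral>g. Y1 g p q \<partial>M)" for p q
  define F where "F r a k x = P r ((a, k), x div d2)" for r a k x
  define G where "G s b k x = Q s ((b, k), x mod d2)" for s b k x
  let ?\<Phi> = "Phi_op M mul iv d1 \<sigma>1 d2 \<sigma>2 \<alpha>1 \<alpha>2 \<rho>"
  have ent: "?\<Phi> $$ (x, y) = (\<Sum>a\<in>{..<da1}. \<Sum>b\<in>{..<da2}. \<Sum>k\<in>{..<dr}. \<Sum>l\<in>{..<dr}.
        (\<Sum>r\<in>I1. cnj (F r a k x) * F r a l y) * (\<Sum>s\<in>I2. cnj (G s b k x) * G s b l y))"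
    if x: "x < n" and y: "y < n" for x y
  proof -
    have d2: "d2 > 0" using x unfolding n_def by (cases d2) auto
    have xd: "x div d2 < d1" "y div d2 < d1" using x y d2 unfolding n_def
      by (simp_all add: less_mult_imp_div_less mult.commute)
    have xm: "x mod d2 < d2" "y mod d2 < d2" using d2 by auto
    have "?\<Phi> $$ (x, y) = integral\<^sup>L (M \<Otimes>\<^sub>M M)
        (\<lambda>(g, h). character \<alpha>1 g * character \<alpha>2 h * character \<rho> (mul g (iv h))
                   * tensor_mat d1 d2 (\<sigma>1 g) (\<sigma>2 h) $$ (x, y))"
      unfolding Phi_op_def using x y n_def by simp
    also have "\<dots> = integral\<^sup>L (M \<Otimes>\<^sub>M M) (\<lambda>z. \<Sum>a\<in>{..<da1}. \<Sum>b\<in>{..<da2}. \<Sum>k\<in>{..<dr}. \<Sum>l\<in>{..<dr}.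
          X1 (fst z) ((a, k), x div d2) ((a, l), y div d2) * Y1 (snd z) ((b, k), x mod d2) ((b, l), y mod d2))"
    proof (rule Bochner_Integration.integral_cong[OF refl])
      fix z assume "z \<in> space (M \<Otimes>\<^sub>M M)"
      then obtain g h where z: "z = (g, h)" and g: "g \<in> topspace T" and h: "h \<in> topspace T"
        by (auto simp: space_pair_measure space_M)
      have cr: "character \<rho> (mul g (iv h)) = (\<Sum>k<dr. \<Sum>l<dr. \<rho> g $$ (k, l) * cnj (\<rho> h $$ (k, l)))"
        using char_eq[OF Ur mul_in[OF g iv_in[OF h]]] r_mul_entry[OF Ur g iv_in[OF h]] r_iv_entry[OF Ur h]
        by simp
      have te: "tensor_mat d1 d2 (\<sigma>1 g) (\<sigma>2 h) $$ (x, y) = \<sigma>1 g $$ (x div d2, y div d2) * \<sigma>2 h $$ (x mod d2, y mod d2)"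
        unfolding tensor_mat_def using x y n_def by simp
      show "(case z of (g, h) \<Rightarrow> character \<alpha>1 g * character \<alpha>2 h * character \<rho> (mul g (iv h))
                   * tensor_mat d1 d2 (\<sigma>1 g) (\<sigma>2 h) $$ (x, y)) = (\<Sum>a\<in>{..<da1}. \<Sum>b\<in>{..<da2}. \<Sum>k\<in>{..<dr}. \<Sum>l\<in>{..<dr}.
          X1 (fst z) ((a, k), x div d2) ((a, l), y div d2) * Y1 (snd z) ((b, k), x mod d2) ((b, l), y mod d2))"
        unfolding z using cr te char_eq[OF Ua1 g] char_eq[OF Ua2 h]
        by (simp add: X1_def Y1_def tens_def sum_distrib_left sum_distrib_right mult_ac sum.swap[of _ "{..<da2}" "{..<dr}"])
    qed
    also have "\<dots> = (\<Sum>a\<in>{..<da1}. \<Sum>b\<in>{..<da2}. \<Sum>k\<in>{..<dr}. \<Sum>l\<in>{..<dr}.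
          P ((a, k), x div d2) ((a, l), y div d2) * Q ((b, k), x mod d2) ((b, l), y mod d2))"
      unfolding P_def Q_def
    proof (rule int_sum4)
      fix a b k l assume "a \<in> {..<da1}" "b \<in> {..<da2}" "k \<in> {..<dr}" "l \<in> {..<dr}"
      then show "good (\<lambda>g. X1 g ((a, k), x div d2) ((a, l), y div d2))"
        "good (\<lambda>g. Y1 g ((b, k), x mod d2) ((b, l), y mod d2))"
        unfolding X1_def Y1_def tens_def
        by (auto intro!: good_mult good_cnj good_entr[OF U1] good_entr[OF U2] good_entr[OF Ua1] good_entr[OF Ua2]
          good_entr[OF Ur] xd xm)
    qed auto
    also have "\<dots> = (\<Sum>a\<in>{..<da1}. \<Sum>b\<in>{..<da2}. \<Sum>k\<in>{..<dr}. \<Sum>l\<in>{..<dr}.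
        (\<Sum>r\<in>I1. cnj (F r a k x) * F r a l y) * (\<Sum>s\<in>I2. cnj (G s b k x) * G s b l y))"
    proof (intro sum.cong refl)
      fix a b k l assume "a \<in> {..<da1}" "b \<in> {..<da2}" "k \<in> {..<dr}" "l \<in> {..<dr}"
      then have m: "((a, k), x div d2) \<in> I1" "((a, l), y div d2) \<in> I1"
          "((b, k), x mod d2) \<in> I2" "((b, l), y mod d2) \<in> I2"
        using xd xm unfolding I1_def I2_def by auto
      show "P ((a, k), x div d2) ((a, l), y div d2) * Q ((b, k), x mod d2) ((b, l), y mod d2) =
        (\<Sum>r\<in>I1. cnj (F r a k x) * F r a l y) * (\<Sum>s\<in>I2. cnj (G s b k x) * G s b l y)"
        unfolding F_def G_def P_def Q_def
        using keyA[OF mX fI1 m(1,2)] keyA[OF mY fI2 m(3,4)] by simp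
    qed
    finally show ?thesis .
  qed
  show ?thesis unfolding positive_op_def
  proof (intro ballI conjI)
    fix v :: "complex vec" assume v: "v \<in> carrier_vec (d1 * d2)"
    have dimP: "dim_row ?\<Phi> = n" "dim_col ?\<Phi> = n" by (simp_all add: Phi_op_def n_def)
    have dv: "dim_vec v = n" using v n_def by simp
    have "conjugate v \<bullet> (?\<Phi> *\<^sub>v v) = (\<Sum>x\<in>{0..<n}. cnj (v $ x) * (\<Sum>y\<in>{0..<n}. ?\<Phi> $$ (x, y) * v $ y))"
      using dimP dv by (simp add: scalar_prod_def mult_mat_vec_def)
    also have "\<dots> = (\<Sum>x\<in>{0..<n}. cnj (v $ x) * (\<Sum>y\<in>{0..<n}. (\<Sum>a\<in>{..<da1}. \<Sum>b\<in>{..<da2}. \<Sum>k\<in>{..<dr}. \<Sum>l\<in>{..<dr}.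
        (\<Sum>r\<in>I1. cnj (F r a k x) * F r a l y) * (\<Sum>s\<in>I2. cnj (G s b k x) * G s b l y)) * v $ y))"
      by (intro sum.cong refl arg_cong2[where f="(*)"]) (simp_all add: ent)
    also have "\<dots> = (\<Sum>a\<in>{..<da1}. \<Sum>b\<in>{..<da2}. \<Sum>r\<in>I1. \<Sum>s\<in>I2.
        cnj (\<Sum>x\<in>{0..<n}. \<Sum>k\<in>{..<dr}. F r a k x * G s b k x * v $ x) * (\<Sum>y\<in>{0..<n}. \<Sum>l\<in>{..<dr}. F r a l y * G s b l y * v $ y))"
      by (rule reorder)
    finally have eq: "conjugate v \<bullet> (?\<Phi> *\<^sub>v v) = \<dots>" .
    show "Im (conjugate v \<bullet> (?\<Phi> *\<^sub>v v)) = 0" "0 \<le> Re (conjugate v \<bullet> (?\<Phi> *\<^sub>v v))"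
      unfolding eq by (rule sum4_psd)+
  qed
qed

end

theorem lemma1:
  fixes T :: "'g topology" and mul :: "'g \<Rightarrow> 'g \<Rightarrow> 'g" and iv :: "'g \<Rightarrow> 'g" and e :: 'g
    and M :: "'g measure"
    and \<sigma>1 \<sigma>2 \<alpha>1 \<alpha>2 \<rho> :: "'g \<Rightarrow> complex mat"
    and d1 d2 da1 da2 dr :: nat
  assumes "compact_group T mul iv e"
    and "normalized_haar T mul M"
    and "unitary_rep T mul d1 \<sigma>1"
    and "unitary_rep T mul d2 \<sigma>2"
    and "unitary_rep T mul da1 \<alpha>1"
    and "unitary_rep T mul da2 \<alpha>2"
    and "unitary_rep T mul dr \<rho>"
  shows "positive_op (d1 * d2) (Phi_op M mul iv d1 \<sigma>1 d2 \<sigma>2 \<alpha>1 \<alpha>2 \<rho>)"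
proof -
  interpret cgrp T mul iv e M using assms(1,2) by (rule cgrp.intro)
  show ?thesis using assms(3-7) by (rule main)
qed

end
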